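(* In any execution of $\mathtt{search}(\mathcal{G},T)$ (defined in the context), consider the lowest region of the decomposition, i.e. an iteration of the inner loop in which the computed region $Z$ equals the whole vertex set $V'$ of the current subgame $\mathcal{G}'$. Then extract-tangles$(Z,\sigma)$ returns at least one tangle.
   Context: Parity games: $\mathcal{G}=(V_0,V_1,E,\mathrm{pr})$, $V=V_0\cup V_1$ finite, partitioned into vertices of Even ($0$) and Odd ($1$); $E\subseteq V\times V$ with every vertex having a successor; $\mathrm{pr}:V\to\{0,\dots,d\}$. $E(u)=\{v:(u,v)\in E\}$, $\mathrm{pr}(U)=\max_{u\in U}\mathrm{pr}(u)$, $\mathrm{pr}^{-1}(p)$ the set of vertices of priority $p$, $\overline{\alpha}=1-\alpha$. A cycle is won by $\alpha$ if its highest priority has parity $\alpha$. A strategy of $\alpha$ is a partial function $\sigma$ on $V_\alpha$ with $\sigma(v)\in E(v)$. For $U\subseteq V$, $\mathcal{G}\cap U$ is the subgame with vertices $V\cap U$ and edges $E\cap(U\times U)$, and $\mathcal{G}\setminus U=\mathcal{G}\cap(V\setminus U)$. A $p$-tangle is a nonempty $U\subseteq V$ with $p=\mathrm{pr}(U)$ such that for $\alpha\equiv p\pmod 2$ there is a strategy $\sigma:U\cap V_\alpha\to U$ (witness strategy $\sigma_T(U)$) with $(U,E\cap(\sigma\cup((U\cap V_{\overline{\alpha}})\times U)))$ strongly connected and all its cycles won by $\alpha$ ("won by $\alpha$"). For a tangle $t$ won by $\alpha$ in a game with edge set $E$, $E_T(t)=\{v\notin t:\exists u\in t\cap V_{\overline{\alpha}},(u,v)\in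 E\}$. $T_\alpha$ denotes the tangles of $T$ won by $\alpha$; for a subgame $\mathcal{G}'$, $T\cap\mathcal{G}'$ denotes the tangles of $T$ contained in its vertex set. Tangle attractor: for a game $\mathcal{G}$ with vertices $V$, tangles $T$, player $\alpha$ and $A\subseteq V$, $\mathit{TAttr}^{\mathcal{G},T}_\alpha(A)$ is the least $Z\supseteq A$ containing every $v\in V_\alpha$ with $E(v)\cap Z\neq\emptyset$, every $v\in V_{\overline{\alpha}}$ with $E(v)\subseteq Z$, and every vertex of every $t\in T_\alpha$ with $\emptyset\neq E_T(t)\subseteq Z$ ($E_T$ computed in $\mathcal{G}$). It is computed iteratively together with a strategy $\sigma$ of $\alpha$ (initially empty): when an $\alpha$-vertex is added individually, $\sigma$ maps it to a successor already in $Z$; each $\alpha$-vertex of $A$ gets as $\sigma$-value a successor in $Z$ once one exists; when the vertices of a tangle $t$ are added, $\sigma(u):=\sigma_T(t)(u)$ for every $\alpha$-vertex $u\in t$ not yet in $\mathrm{dom}(\sigma)$. extract-tangles$(Z,\sigma)$, for a subgame $\mathcal{G}'=(V',E')$ with top priority $p$, $\alpha\equiv p$, region $Z\subseteq V'$ and strategy $\sigma$: let $Y_Z$ be the greatest $X\subseteq Z$ such that every $v\in X\cap V_{\overline{\alpha}}$ has $E'(v)\subseteq X$ and every $v\in X\cap V_\alpha$ has $\sigma(v)\in X$; let $H$ be the graph on $Y_Z$ with edges $(v,\sigma(v))$ for $v\in Y_Z\cap V_\alpha$ and $(v,w)\in E'$ for $v\in Y_Z\cap V_{\overline{\alpha}}$;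 return all bottom strongly connected components of $H$ that contain at least one edge of $H$, each with witness strategy $\sigma$ restricted to it. $\mathtt{search}(\mathcal{G},T)$ (with $T$ a set of tangles of $\mathcal{G}$): repeat forever: set $r:=\emptyset$ (a partial function $V\to\mathbb{N}$, the region function) and $Y:=\emptyset$; while $V\setminus\mathrm{dom}(r)\neq\emptyset$: let $\mathcal{G}':=\mathcal{G}\setminus\mathrm{dom}(r)$ with vertex set $V'$, $T':=T\cap\mathcal{G}'$, $p:=\mathrm{pr}(\mathcal{G}')$, $\alpha:=p\bmod 2$; compute $(Z,\sigma):=\mathit{TAttr}^{\mathcal{G}',T'}_\alpha(\mathrm{pr}^{-1}(p)\cap V')$ (the region of priority $p$); let $A:=$ extract-tangles$(Z,\sigma)$; if some $t\in A$ has $E_T(t)=\emptyset$ with $E_T$ computed in the full game $\mathcal{G}$, return $(T\cup Y,t)$; otherwise set $r(v):=p$ for all $v\in Z$ and $Y:=Y\cup A$. After the while-loop, set $T:=T\cup Y$. *)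

theory Defs
  imports Main
begin

record 'v pgame =
  V0 :: "'v set"
  V1 :: "'v set"
  Edges :: "('v \<times> 'v) set"
  pr :: "'v \<Rightarrow> nat"

definition verts :: "'v pgame \<Rightarrow> 'v set" where
  "verts G = V0 G \<union> V1 G"

definition valid_game :: "'v pgame \<Rightarrow> bool" where
  "valid_game G \<longleftrightarrow> finite (verts G) \<and> V0 G \<inter> V1 G = {}
     \<and> Edges G \<subseteq> verts G \<times> verts G
     \<and> (\<forall>v\<in>verts G. \<exists>w. (v, w) \<in> Edges G)"

text \<open>Vertices of player alpha (0 = Even, 1 = Odd).\<close>
definition Vp :: "'v pgame \<Rightarrow> nat \<Rightarrow> 'v set" where
  "Vp G a = (if a = 0 then V0 G else V1 G)"

definition opp :: "nat \<Rightarrow> nat" where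
  "opp a = 1 - a"

definition prio :: "'v pgame \<Rightarrow> 'v set \<Rightarrow> nat" where
  "prio G U = Max (pr G ` U)"

definition subgame :: "'v pgame \<Rightarrow> 'v set \<Rightarrow> 'v pgame" where
  "subgame G U = \<lparr>V0 = V0 G \<inter> U, V1 = V1 G \<inter> U, Edges = Edges G \<inter> (U \<times> U), pr = pr G\<rparr>"

definition is_cycle :: "('v \<times> 'v) set \<Rightarrow> 'v list \<Rightarrow> bool" where
  "is_cycle R xs \<longleftrightarrow> xs \<noteq> [] \<and>
     (\<forall>i < length xs. (xs ! i, xs ! ((i + 1) mod length xs)) \<in> R)"

definition tgraph :: "'v pgame \<Rightarrow> nat \<Rightarrow> 'v set \<Rightarrow> ('v \<rightharpoonup> 'v) \<Rightarrow> ('v \<times> 'v) set" where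
  "tgraph G a U s =
     {(u, w). u \<in> U \<inter> Vp G a \<and> s u = Some w}
     \<union> {(u, w). (u, w) \<in> Edges G \<and> u \<in> U \<inter> Vp G (opp a) \<and> w \<in> U}"

definition tangle :: "'v pgame \<Rightarrow> 'v set \<Rightarrow> ('v \<rightharpoonup> 'v) \<Rightarrow> bool" where
  "tangle G U s \<longleftrightarrow> (let a = prio G U mod 2; R = tgraph G a U s in
     U \<noteq> {} \<and> U \<subseteq> verts G \<and>
     dom s = U \<inter> Vp G a \<and>
     (\<forall>u \<in> dom s. \<exists>w. s u = Some w \<and> w \<in> U \<and> (u, w) \<in> Edges G) \<and>
     (\<forall>u \<in> U. \<forall>w \<in> U. (u, w) \<in> R\<^sup>*) \<and>
     (\<forall>xs. is_cycle R xs \<longrightarrow> prio G (set xs) mod 2 = a))"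

definition escapes :: "'v pgame \<Rightarrow> nat \<Rightarrow> 'v set \<Rightarrow> 'v set" where
  "escapes G a U = {v. v \<notin> U \<and> (\<exists>u \<in> U \<inter> Vp G (opp a). (u, v) \<in> Edges G)}"

type_synonym 'v tangles = "('v set \<times> ('v \<rightharpoonup> 'v)) set"

inductive tattr_step :: "'v pgame \<Rightarrow> 'v tangles \<Rightarrow> nat \<Rightarrow> 'v set
    \<Rightarrow> ('v set \<times> ('v \<rightharpoonup> 'v)) \<Rightarrow> ('v set \<times> ('v \<rightharpoonup> 'v)) \<Rightarrow> bool"
  for G T a A where
  add_alpha: "\<lbrakk> v \<in> Vp G a; v \<notin> Z; (v, w) \<in> Edges G; w \<in> Z \<rbrakk>
     \<Longrightarrow> tattr_step G T a A (Z, s) (insert v Z, s(v \<mapsto> w))"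
| add_opp: "\<lbrakk> v \<in> Vp G (opp a); v \<notin> Z; Edges G `` {v} \<subseteq> Z \<rbrakk>
     \<Longrightarrow> tattr_step G T a A (Z, s) (insert v Z, s)"
| add_tangle: "\<lbrakk> (U, t) \<in> T; prio G U mod 2 = a; \<not> U \<subseteq> Z;
       escapes G a U \<noteq> {}; escapes G a U \<subseteq> Z \<rbrakk>
     \<Longrightarrow> tattr_step G T a A (Z, s)
          (Z \<union> U, \<lambda>u. if u \<in> U \<inter> Vp G a \<and> s u = None then t u else s u)"
| set_target: "\<lbrakk> v \<in> A \<inter> Vp G a; s v = None; (v, w) \<in> Edges G; w \<in> Z \<rbrakk>
     \<Longrightarrow> tattr_step G T a A (Z, s) (Z, s(v \<mapsto> w))"

text \<open>(Z, s) is a possible result of computing TAttr^{G,T}_a(A) with its strategy.\<close>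
definition tattr :: "'v pgame \<Rightarrow> 'v tangles \<Rightarrow> nat \<Rightarrow> 'v set
    \<Rightarrow> 'v set \<Rightarrow> ('v \<rightharpoonup> 'v) \<Rightarrow> bool" where
  "tattr G T a A Z s \<longleftrightarrow>
     (tattr_step G T a A)\<^sup>*\<^sup>* (A, Map.empty) (Z, s) \<and>
     \<not> (\<exists>v \<in> Vp G a - Z. \<exists>w \<in> Z. (v, w) \<in> Edges G) \<and>
     \<not> (\<exists>v \<in> Vp G (opp a) - Z. Edges G `` {v} \<subseteq> Z) \<and>
     \<not> (\<exists>(U, t) \<in> T. prio G U mod 2 = a \<and> \<not> U \<subseteq> Z \<and>
          escapes G a U \<noteq> {} \<and> escapes G a U \<subseteq> Z) \<and>
     (\<forall>v \<in> A \<inter> Vp G a. (\<exists>w \<in> Z. (v, w) \<in> Edges G) \<longrightarrow> s v \<noteq> None)"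

definition ext_closed :: "'v pgame \<Rightarrow> nat \<Rightarrow> 'v set \<Rightarrow> ('v \<rightharpoonup> 'v) \<Rightarrow> 'v set \<Rightarrow> bool" where
  "ext_closed G a Z s X \<longleftrightarrow> X \<subseteq> Z \<and>
     (\<forall>v \<in> X \<inter> Vp G (opp a). Edges G `` {v} \<subseteq> X) \<and>
     (\<forall>v \<in> X \<inter> Vp G a. \<exists>w \<in> X. s v = Some w)"

text \<open>Y_Z: the greatest closed subset of Z (the union of all closed subsets).\<close>
definition ext_core :: "'v pgame \<Rightarrow> nat \<Rightarrow> 'v set \<Rightarrow> ('v \<rightharpoonup> 'v) \<Rightarrow> 'v set" where
  "ext_core G a Z s = \<Union> {X. ext_closed G a Z s X}"

definition ext_graph :: "'v pgame \<Rightarrow> nat \<Rightarrow> 'v set \<Rightarrow> ('v \<rightharpoonup> 'v) \<Rightarrow> ('v \<times> 'v) set" where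
  "ext_graph G a Z s = (let Y = ext_core G a Z s in
     {(v, w). v \<in> Y \<inter> Vp G a \<and> s v = Some w}
     \<union> {(v, w). (v, w) \<in> Edges G \<and> v \<in> Y \<inter> Vp G (opp a)})"

definition bottom_scc_with_edge :: "'v set \<Rightarrow> ('v \<times> 'v) set \<Rightarrow> 'v set \<Rightarrow> bool" where
  "bottom_scc_with_edge Y H C \<longleftrightarrow>
     C \<noteq> {} \<and> C \<subseteq> Y \<and>
     (\<forall>u \<in> C. \<forall>w \<in> C. (u, w) \<in> H\<^sup>*) \<and>
     (\<forall>u \<in> C. \<forall>v. (u, v) \<in> H\<^sup>* \<and> (v, u) \<in> H\<^sup>* \<longrightarrow> v \<in> C) \<and>
     (\<forall>u \<in> C. \<forall>w. (u, w) \<in> H \<longrightarrow> w \<in> C) \<and>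
     (\<exists>u \<in> C. \<exists>w \<in> C. (u, w) \<in> H)"

definition extract_tangles :: "'v pgame \<Rightarrow> nat \<Rightarrow> 'v set \<Rightarrow> ('v \<rightharpoonup> 'v) \<Rightarrow> 'v tangles" where
  "extract_tangles G a Z s =
     {(C, s |` C) | C. bottom_scc_with_edge (ext_core G a Z s) (ext_graph G a Z s) C}"

text \<open>search_state G T0 T r Y: the state (T, r, Y) at the head of an iteration of the
  inner while-loop is reachable in an execution of search(G, T0).\<close>
inductive search_state :: "'v pgame \<Rightarrow> 'v tangles \<Rightarrow> 'v tangles \<Rightarrow> ('v \<rightharpoonup> nat)
    \<Rightarrow> 'v tangles \<Rightarrow> bool"
  for G T0 where
  start: "search_state G T0 T0 Map.empty {}"
| inner: "\<lbrakk> search_state G T0 T r Y;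
     verts G - dom r \<noteq> {};
     G' = subgame G (verts G - dom r);
     T' = {t \<in> T. fst t \<subseteq> verts G'};
     p = prio G (verts G');
     a = p mod 2;
     tattr G' T' a {v \<in> verts G'. pr G v = p} Z s;
     A = extract_tangles G' a Z s;
     \<forall>t \<in> A. escapes G a (fst t) \<noteq> {} \<rbrakk>
   \<Longrightarrow> search_state G T0 T (r ++ (\<lambda>v. if v \<in> Z then Some p else None)) (Y \<union> A)"
| outer: "\<lbrakk> search_state G T0 T r Y; verts G - dom r = {} \<rbrakk>
   \<Longrightarrow> search_state G T0 (T \<union> Y) Map.empty {}"

end

theory Submission imports Defs begin

lemma Vp_disj: "a < 2 \<Longrightarrow> V0 H \<inter> V1 H = {} \<Longrightarrow> Vp H a \<inter> Vp H (opp a) = {}"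
  by (auto simp: Vp_def opp_def)

lemma Vp_cover: "a < 2 \<Longrightarrow> verts H = Vp H a \<union> Vp H (opp a)"
  by (auto simp: Vp_def opp_def verts_def)

lemma Vp_verts: "Vp H a \<subseteq> verts H"
  by (auto simp: Vp_def verts_def)

lemma Vp_subgame[simp]: "Vp (subgame G U) a = Vp G a \<inter> U"
  by (auto simp: Vp_def subgame_def)

lemma verts_subgame[simp]: "verts (subgame G U) = verts G \<inter> U"
  by (auto simp: verts_def subgame_def)

lemma Edges_subgame[simp]: "Edges (subgame G U) = Edges G \<inter> (U \<times> U)"
  by (simp add: subgame_def)

lemma pr_subgame[simp]: "pr (subgame G U) = pr G"
  by (simp add: subgame_def)

lemma V01_subgame[simp]: "V0 (subgame G U) = V0 G \<inter> U" "V1 (subgame G U) = V1 G \<inter> U"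
  by (simp_all add: subgame_def)

lemma prio_subgame[simp]: "prio (subgame G U) X = prio G X"
  by (simp add: prio_def)

lemma tgraph_subgame: "U \<subseteq> W \<Longrightarrow> tgraph (subgame G W) a U t = tgraph G a U t"
  by (auto simp: tgraph_def)

definition Rg :: "'v pgame \<Rightarrow> nat \<Rightarrow> 'v set \<Rightarrow> ('v \<rightharpoonup> 'v) \<Rightarrow> ('v \<times> 'v) set" where
  "Rg H a Z s = {(v,w). v \<in> Z \<and> w \<in> Z \<and> ((v \<in> Vp H a \<and> s v = Some w) \<or> ((v,w) \<in> Edges H \<and> v \<in> Vp H (opp a)))}"

definition won_all :: "'v pgame \<Rightarrow> nat \<Rightarrow> ('v \<times> 'v) set \<Rightarrow> bool" where
  "won_all H a R \<longleftrightarrow> (\<forall>xs. is_cycle R xs \<longrightarrow> prio H (set xs) mod 2 = a)"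

lemma is_cycle_mono: "is_cycle R xs \<Longrightarrow> R \<subseteq> R' \<Longrightarrow> is_cycle R' xs"
  by (auto simp: is_cycle_def)

lemma won_all_mono: "won_all H a R' \<Longrightarrow> R \<subseteq> R' \<Longrightarrow> won_all H a R"
  by (meson is_cycle_mono won_all_def)

lemma won_all_empty: "won_all H a {}"
  by (auto simp: won_all_def is_cycle_def)

definition rank_ok where
  "rank_ok H a A Z s \<longleftrightarrow> (\<exists>rk tg. (\<forall>k. won_all H a (tg k)) \<and>
     (\<forall>(v,w)\<in>Rg H a Z s. v \<in> A \<or> rk w < (rk v :: nat) \<or> (rk w = rk v \<and> (v,w) \<in> tg (rk v))))"

lemma rank_extend:
  assumes "finite Z" "rank_ok H a A Z s" "won_all H a Q"
    and old: "\<And>x y. x \<in> Z \<Longrightarrow> (x,y) \<in> Rg H a (Z \<union> W) s' \<Longrightarrow> (x,y) \<in> Rg H a Z s \<or> x \<in> A"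
    and new: "\<And>x y. x \<in> W \<Longrightarrow> x \<notin> Z \<Longrightarrow> (x,y) \<in> Rg H a (Z \<union> W) s' \<Longrightarrow> y \<in> Z \<or> (y \<in> W \<and> (x,y) \<in> Q)"
  shows "rank_ok H a A (Z \<union> W) s'"
proof -
  obtain rk tg where w: "\<forall>k. won_all H a (tg k)"
    and r: "\<forall>(v,w)\<in>Rg H a Z s. v \<in> A \<or> rk w < (rk v :: nat) \<or> (rk w = rk v \<and> (v,w) \<in> tg (rk v))"
    using assms(2) unfolding rank_ok_def by blast
  define N where "N = Suc (Max (insert 0 (rk ` Z)))"
  have lt: "x \<in> Z \<Longrightarrow> rk x < N" for x
    using assms(1) unfolding N_def by (simp add: le_imp_less_Suc)
  define rk' where "rk' x = (if x \<in> Z then rk x else N)" for x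
  define tg' where "tg' = tg(N := Q)"
  have "\<forall>k. won_all H a (tg' k)" using w assms(3) by (simp add: tg'_def)
  moreover have "rk' y < rk' x \<or> (rk' y = rk' x \<and> (x,y) \<in> tg' (rk' x))"
    if e: "(x,y) \<in> Rg H a (Z \<union> W) s'" and nA: "x \<notin> A" for x y
  proof -
    have xZ: "x \<in> Z \<union> W" using e by (simp add: Rg_def)
    show "rk' y < rk' x \<or> (rk' y = rk' x \<and> (x,y) \<in> tg' (rk' x))"
    proof (cases "x \<in> Z")
      case True
      with old[OF True e] nA have e0: "(x,y) \<in> Rg H a Z s" by blast
      hence yZ: "y \<in> Z" by (simp add: Rg_def)
      from r e0 nA have "rk y < rk x \<or> (rk y = rk x \<and> (x,y) \<in> tg (rk x))" by blast
      moreover have "tg' (rk x) = tg (rk x)" using lt[OF True] by (simp add: tg'_def)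
      ultimately show ?thesis using True yZ by (simp add: rk'_def)
    next
      case False
      with xZ have xW: "x \<in> W" by blast
      from new[OF xW False e] show ?thesis
        using lt False by (auto simp: rk'_def tg'_def)
    qed
  qed
  ultimately show ?thesis unfolding rank_ok_def by blast
qed

definition ctx :: "'v pgame \<Rightarrow> 'v tangles \<Rightarrow> nat \<Rightarrow> 'v set \<Rightarrow> bool" where
  "ctx H T a A \<longleftrightarrow> finite (verts H) \<and> V0 H \<inter> V1 H = {} \<and> a < 2 \<and>
     Edges H \<subseteq> verts H \<times> verts H \<and> A \<subseteq> verts H \<and>
     (\<forall>(U,t)\<in>T. U \<subseteq> verts H \<and> (prio H U mod 2 = a \<longrightarrow>
        (\<forall>u\<in>U \<inter> Vp H a. \<exists>w\<in>U. t u = Some w) \<and> won_all H a (tgraph H a U t)))"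

definition tinv :: "'v pgame \<Rightarrow> nat \<Rightarrow> 'v set \<Rightarrow> 'v set \<Rightarrow> ('v \<rightharpoonup> 'v) \<Rightarrow> bool" where
  "tinv H a A Z s \<longleftrightarrow> A \<subseteq> Z \<and> Z \<subseteq> verts H \<and> dom s \<subseteq> Z \<inter> Vp H a \<and>
     (\<forall>v w. s v = Some w \<longrightarrow> w \<in> Z) \<and> (\<forall>v\<in>Z \<inter> Vp H a - A. s v \<noteq> None) \<and>
     (\<forall>x\<in>Z \<inter> Vp H (opp a) - A. Edges H `` {x} \<subseteq> Z) \<and> rank_ok H a A Z s"

lemma tinv_init: "ctx H T a A \<Longrightarrow> tinv H a A A Map.empty"
proof -
  assume "ctx H T a A"
  then have "A \<subseteq> verts H" by (simp add: ctx_def)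
  moreover have "rank_ok H a A A Map.empty"
    unfolding rank_ok_def
    by (rule exI[of _ "\<lambda>_. 0"], rule exI[of _ "\<lambda>_. {}"]) (auto simp: won_all_empty Rg_def)
  ultimately show ?thesis unfolding tinv_def by auto
qed

lemma tinv_step:
  assumes c: "ctx H T a A" and st: "tattr_step H T a A (Z, s) (Z', s')" and I: "tinv H a A Z s"
  shows "tinv H a A Z' s'"
proof -
  have fin: "finite (verts H)" and dis: "Vp H a \<inter> Vp H (opp a) = {}" and a2: "a < 2"
    and EV: "Edges H \<subseteq> verts H \<times> verts H"
    and TT: "\<And>U t. (U,t) \<in> T \<Longrightarrow> U \<subseteq> verts H \<and> (prio H U mod 2 = a \<longrightarrow>
        (\<forall>u\<in>U \<inter> Vp H a. \<exists>w\<in>U. t u = Some w) \<and> won_all H a (tgraph H a U t))"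
    using c Vp_disj unfolding ctx_def by blast+
  have AZ: "A \<subseteq> Z" and ZV: "Z \<subseteq> verts H" and ds: "dom s \<subseteq> Z \<inter> Vp H a"
    and vals: "\<And>v w. s v = Some w \<Longrightarrow> w \<in> Z"
    and tot: "\<And>v. v \<in> Z \<Longrightarrow> v \<in> Vp H a \<Longrightarrow> v \<notin> A \<Longrightarrow> s v \<noteq> None"
    and oc: "\<And>x. x \<in> Z \<Longrightarrow> x \<in> Vp H (opp a) \<Longrightarrow> x \<notin> A \<Longrightarrow> Edges H `` {x} \<subseteq> Z"
    and rk: "rank_ok H a A Z s"
    using I unfolding tinv_def by blast+
  have finZ: "finite Z" using fin ZV finite_subset by blast
  from st show ?thesis
  proof (cases rule: tattr_step.cases)
    case (add_alpha v w)
    have vV: "v \<in> verts H" using add_alpha EV by blast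
    have nopp: "v \<notin> Vp H (opp a)" using add_alpha dis by blast
    have "rank_ok H a A (Z \<union> {v}) s'"
    proof (rule rank_extend[OF finZ rk won_all_empty])
      fix x y assume x: "x \<in> Z" and e: "(x,y) \<in> Rg H a (Z \<union> {v}) s'"
      have xv: "x \<noteq> v" using x add_alpha by blast
      show "(x,y) \<in> Rg H a Z s \<or> x \<in> A"
      proof (cases "y = v")
        case True
        then show ?thesis using e x xv vals[of x v] oc[of x] add_alpha by (auto simp: Rg_def)
      next
        case False
        then show ?thesis using e x xv add_alpha by (auto simp: Rg_def)
      qed
    next
      fix x y assume "x \<in> {v}" "x \<notin> Z" "(x,y) \<in> Rg H a (Z \<union> {v}) s'"
      then show "y \<in> Z \<or> (y \<in> {v} \<and> (x,y) \<in> {})" using add_alpha nopp by (auto simp: Rg_def)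
    qed
    moreover have "\<forall>x\<in>Z' \<inter> Vp H (opp a) - A. Edges H `` {x} \<subseteq> Z'"
      using oc add_alpha nopp by blast
    ultimately show ?thesis using add_alpha AZ ZV vV ds vals tot nopp
      unfolding tinv_def by (auto split: if_splits)
  next
    case (add_opp v)
    have vV: "v \<in> verts H" using add_opp Vp_verts[of H "opp a"] by blast
    have nal: "v \<notin> Vp H a" using add_opp dis by blast
    have "rank_ok H a A (Z \<union> {v}) s'"
    proof (rule rank_extend[OF finZ rk won_all_empty])
      fix x y assume x: "x \<in> Z" and e: "(x,y) \<in> Rg H a (Z \<union> {v}) s'"
      have xv: "x \<noteq> v" using x add_opp by blast
      show "(x,y) \<in> Rg H a Z s \<or> x \<in> A"
      proof (cases "y = v")
        case True
        then show ?thesis using e x xv vals[of x v] oc[of x] add_opp by (auto simp: Rg_def)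
      next
        case False
        then show ?thesis using e x xv add_opp by (auto simp: Rg_def)
      qed
    next
      fix x y assume "x \<in> {v}" "x \<notin> Z" "(x,y) \<in> Rg H a (Z \<union> {v}) s'"
      then show "y \<in> Z \<or> (y \<in> {v} \<and> (x,y) \<in> {})" using add_opp nal by (auto simp: Rg_def)
    qed
    moreover have "\<forall>x\<in>Z' \<inter> Vp H (opp a) - A. Edges H `` {x} \<subseteq> Z'"
      using oc add_opp by blast
    ultimately show ?thesis using add_opp AZ ZV vV ds vals tot nal
      unfolding tinv_def by auto
  next
    case (add_tangle U t)
    note TU = TT[OF add_tangle(3)]
    have UV: "U \<subseteq> verts H" using TU by blast
    have tU: "\<And>u. u \<in> U \<Longrightarrow> u \<in> Vp H a \<Longrightarrow> \<exists>w\<in>U. t u = Some w" using TU add_tangle by blast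
    have wU: "won_all H a (tgraph H a U t)" using TU add_tangle by blast
    have s'd: "s' u = (if u \<in> U \<inter> Vp H a \<and> s u = None then t u else s u)" for u
      using add_tangle by simp
    have esc: "\<And>x y. x \<in> U \<Longrightarrow> x \<in> Vp H (opp a) \<Longrightarrow> (x,y) \<in> Edges H \<Longrightarrow> y \<in> U \<or> y \<in> Z"
      using add_tangle unfolding escapes_def by blast
    have "rank_ok H a A (Z \<union> U) s'"
    proof (rule rank_extend[OF finZ rk wU])
      fix x y assume x: "x \<in> Z" and e: "(x,y) \<in> Rg H a (Z \<union> U) s'"
      show "(x,y) \<in> Rg H a Z s \<or> x \<in> A"
      proof (cases "x \<in> A")
        case False
        have sx: "s' x = s x" using tot[OF x] False s'd[of x] by auto
        show ?thesis
        proof (cases "y \<in> Z")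
          case True
          then show ?thesis using e x sx by (auto simp: Rg_def)
        next
          case yZ: False
          then show ?thesis using e x sx vals[of x y] oc[OF x _ False] by (auto simp: Rg_def)
        qed
      qed simp
    next
      fix x y assume xU: "x \<in> U" and xZ: "x \<notin> Z" and e: "(x,y) \<in> Rg H a (Z \<union> U) s'"
      have sN: "s x = None" using ds xZ by blast
      show "y \<in> Z \<or> (y \<in> U \<and> (x,y) \<in> tgraph H a U t)"
        using e xU sN s'd[of x] by (auto simp: Rg_def tgraph_def)
    qed
    moreover have "dom s' \<subseteq> (Z \<union> U) \<inter> Vp H a" 
    proof
      fix u assume "u \<in> dom s'"
      then obtain w where "s' u = Some w" by blast
      then show "u \<in> (Z \<union> U) \<inter> Vp H a" using ds s'd[of u]
        by (cases "u \<in> U \<inter> Vp H a \<and> s u = None") (auto simp: domI subset_iff)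
    qed
    moreover have "\<forall>v w. s' v = Some w \<longrightarrow> w \<in> Z \<union> U"
    proof (intro allI impI)
      fix v w assume "s' v = Some w"
      then show "w \<in> Z \<union> U" using s'd[of v] vals[of v w] tU[of v] by (auto split: if_splits)
    qed
    moreover have "\<forall>v\<in>(Z \<union> U) \<inter> Vp H a - A. s' v \<noteq> None"
    proof
      fix v assume v: "v \<in> (Z \<union> U) \<inter> Vp H a - A"
      show "s' v \<noteq> None"
      proof (cases "v \<in> Z")
        case True then show ?thesis using v tot[of v] s'd[of v] by auto
      next
        case False then show ?thesis using v tU[of v] s'd[of v] by auto
      qed
    qed
    moreover have "\<forall>x\<in>(Z \<union> U) \<inter> Vp H (opp a) - A. Edges H `` {x} \<subseteq> Z \<union> U"
      using oc esc by blast
    ultimately show ?thesis using add_tangle AZ ZV UV unfolding tinv_def by auto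
  next
    case (set_target v w)
    have "rank_ok H a A Z s'"
    proof -
      obtain rk tg where w: "\<forall>k. won_all H a (tg k)"
        and r: "\<forall>(v,w)\<in>Rg H a Z s. v \<in> A \<or> rk w < (rk v :: nat) \<or> (rk w = rk v \<and> (v,w) \<in> tg (rk v))"
        using rk unfolding rank_ok_def by blast
      have "rk y < rk x \<or> (rk y = rk x \<and> (x,y) \<in> tg (rk x))"
        if e: "(x,y) \<in> Rg H a Z s'" and nA: "x \<notin> A" for x y
      proof -
        from e nA have "(x,y) \<in> Rg H a Z s" using set_target by (auto simp: Rg_def split: if_splits)
        then show "rk y < rk x \<or> (rk y = rk x \<and> (x,y) \<in> tg (rk x))" using r nA by blast
      qed
      then show ?thesis using w unfolding rank_ok_def by blast
    qed
    then show ?thesis using set_target AZ ZV ds vals tot oc unfolding tinv_def by auto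
  qed
qed

lemma tinv_run:
  assumes c: "ctx H T a A" and "(tattr_step H T a A)\<^sup>*\<^sup>* (A, Map.empty) (Z, s)"
  shows "tinv H a A Z s"
proof -
  have "\<And>p. (tattr_step H T a A)\<^sup>*\<^sup>* (A, Map.empty) p \<Longrightarrow> tinv H a A (fst p) (snd p)"
  proof -
    fix p assume "(tattr_step H T a A)\<^sup>*\<^sup>* (A, Map.empty) p"
    then show "tinv H a A (fst p) (snd p)"
    proof (induction rule: rtranclp_induct)
      case base then show ?case using tinv_init[OF c] by simp
    next
      case (step y z)
      then show ?case using tinv_step[OF c, of "fst y" "snd y" "fst z" "snd z"] by simp
    qed
  qed
  from this[OF assms(2)] show ?thesis by simp
qed

lemma prio_eq:
  assumes "finite X" "m \<in> X" "\<forall>x\<in>X. pr H x \<le> pr H m"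
  shows "prio H X = pr H m"
  unfolding prio_def using assms by (intro antisym Max_le_iff[THEN iffD2] Max_ge) auto

lemma desc_cycle:
  fixes f :: "nat \<Rightarrow> nat"
  assumes "n > 0" "\<forall>i<n. f ((i+1) mod n) \<le> f i"
  shows "\<forall>i<n. f i = f 0"
proof -
  have le: "i < n \<Longrightarrow> j \<le> i \<Longrightarrow> f i \<le> f j" for i j
  proof (induction i)
    case 0 then show ?case by simp
  next
    case (Suc i)
    have "f (Suc i) \<le> f i" using assms(2)[rule_format, of i] Suc.prems by simp
    then show ?case using Suc by (cases "j = Suc i") auto
  qed
  have "f 0 \<le> f (n - 1)" using assms(2)[rule_format, of "n - 1"] assms(1) by simp
  then show ?thesis using le assms(1) by (metis diff_less le_antisym le_eq_less_or_eq less_Suc_eq_le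
        Suc_pred zero_le less_one)
qed

lemma final_won:
  assumes I: "tinv H a A Z s" and fin: "finite (verts H)" and Ad: "A = {v\<in>verts H. pr H v = p}"
    and mx: "\<forall>v\<in>verts H. pr H v \<le> p" and pa: "p mod 2 = a"
  shows "won_all H a (Rg H a Z s)"
  unfolding won_all_def
proof (intro allI impI)
  fix xs assume cy: "is_cycle (Rg H a Z s) xs"
  define n where "n = length xs"
  have n0: "n > 0" using cy by (simp add: is_cycle_def n_def)
  have edge: "\<And>i. i < n \<Longrightarrow> (xs!i, xs!((i+1) mod n)) \<in> Rg H a Z s"
    using cy by (simp add: is_cycle_def n_def)
  have ZV: "Z \<subseteq> verts H" using I by (simp add: tinv_def)
  have setZ: "set xs \<subseteq> Z"
  proof
    fix x assume "x \<in> set xs"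
    then obtain i where "i < n" "x = xs!i" by (auto simp: in_set_conv_nth n_def)
    then show "x \<in> Z" using edge[of i] by (auto simp: Rg_def)
  qed
  obtain rk tg where w: "\<forall>k. won_all H a (tg k)"
    and r: "\<forall>(v,w)\<in>Rg H a Z s. v \<in> A \<or> rk w < (rk v :: nat) \<or> (rk w = rk v \<and> (v,w) \<in> tg (rk v))"
    using I unfolding tinv_def rank_ok_def by blast
  show "prio H (set xs) mod 2 = a"
  proof (cases "\<exists>x\<in>set xs. x \<in> A")
    case True
    then obtain m where m: "m \<in> set xs" "m \<in> A" by blast
    have "prio H (set xs) = pr H m"
      using m setZ ZV mx Ad by (intro prio_eq) auto
    then show ?thesis using m Ad pa by simp
  next
    case False
    define f where "f i = rk (xs!i)" for i
    have nA: "i < n \<Longrightarrow> xs!i \<notin> A" for i using False by (auto simp: n_def)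
    have step: "i < n \<Longrightarrow> f ((i+1) mod n) < f i \<or> (f ((i+1) mod n) = f i \<and> (xs!i, xs!((i+1) mod n)) \<in> tg (f i))" for i
      using r edge[of i] nA[of i] unfolding f_def by blast
    have "\<forall>i<n. f ((i+1) mod n) \<le> f i" using step by fastforce
    then have eq: "\<forall>i<n. f i = f 0" using desc_cycle[OF n0] by blast
    have "is_cycle (tg (f 0)) xs"
      unfolding is_cycle_def
    proof (intro conjI allI impI)
      show "xs \<noteq> []" using n0 by (auto simp: n_def)
      fix i assume i: "i < length xs"
      have "(i+1) mod n < n" using n0 by simp
      then have "f ((i+1) mod n) = f i" using eq i by (simp add: n_def)
      then show "(xs ! i, xs ! ((i + 1) mod length xs)) \<in> tg (f 0)"
        using step[of i] i eq by (auto simp: n_def)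
    qed
    then show ?thesis using w unfolding won_all_def by blast
  qed
qed

lemma path_exists:
  assumes "(w,m) \<in> R\<^sup>*"
  shows "\<exists>xs. xs \<noteq> [] \<and> hd xs = w \<and> last xs = m \<and>
     (\<forall>i. Suc i < length xs \<longrightarrow> (xs!i, xs!Suc i) \<in> R) \<and> set xs \<subseteq> {x. (w,x) \<in> R\<^sup>*}"
  using assms
proof (induction rule: converse_rtrancl_induct)
  case base
  then show ?case by (rule exI[of _ "[m]"]) simp
next
  case (step y z)
  then obtain xs where xs: "xs \<noteq> []" "hd xs = z" "last xs = m"
    "\<forall>i. Suc i < length xs \<longrightarrow> (xs!i, xs!Suc i) \<in> R" "set xs \<subseteq> {x. (z,x) \<in> R\<^sup>*}" by blast
  have "\<forall>i. Suc i < length (y#xs) \<longrightarrow> ((y#xs)!i, (y#xs)!Suc i) \<in> R"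
  proof (intro allI impI)
    fix i assume i: "Suc i < length (y#xs)"
    show "((y#xs)!i, (y#xs)!Suc i) \<in> R"
    proof (cases i)
      case 0 then show ?thesis using xs step.hyps(1) by (simp add: hd_conv_nth)
    next
      case (Suc j) then show ?thesis using xs i by simp
    qed
  qed
  moreover have "set (y#xs) \<subseteq> {x. (y,x) \<in> R\<^sup>*}"
    using xs(5) step.hyps(1) by (auto intro: converse_rtrancl_into_rtrancl)
  ultimately show ?case using xs by (intro exI[of _ "y#xs"]) auto
qed

lemma cycle_through:
  assumes "(m,m) \<in> R\<^sup>+"
  shows "\<exists>xs. is_cycle R xs \<and> m \<in> set xs \<and> set xs \<subseteq> {x. (m,x) \<in> R\<^sup>*}"
proof -
  obtain w where mw: "(m,w) \<in> R" and wm: "(w,m) \<in> R\<^sup>*" using assms by (meson tranclD)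
  obtain xs where xs: "xs \<noteq> []" "hd xs = w" "last xs = m"
    "\<forall>i. Suc i < length xs \<longrightarrow> (xs!i, xs!Suc i) \<in> R" "set xs \<subseteq> {x. (w,x) \<in> R\<^sup>*}"
    using path_exists[OF wm] by blast
  have "is_cycle R xs"
    unfolding is_cycle_def
  proof (intro conjI allI impI)
    show "xs \<noteq> []" by fact
    fix i assume i: "i < length xs"
    show "(xs ! i, xs ! ((i + 1) mod length xs)) \<in> R"
    proof (cases "Suc i < length xs")
      case True then show ?thesis using xs(4) by simp
    next
      case False
      then have "i = length xs - 1" using i by simp
      then show ?thesis using xs mw i by (simp add: last_conv_nth hd_conv_nth)
    qed
  qed
  moreover have "m \<in> set xs" using xs by auto
  moreover have "set xs \<subseteq> {x. (m,x) \<in> R\<^sup>*}" using xs(5) mw by (auto intro: converse_rtrancl_into_rtrancl)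
  ultimately show ?thesis by blast
qed

lemma core_closed: "ext_closed H a Z s (ext_core H a Z s)"
proof -
  let ?Y = "ext_core H a Z s"
  have "?Y \<subseteq> Z" unfolding ext_core_def ext_closed_def by blast
  moreover have "\<forall>v \<in> ?Y \<inter> Vp H (opp a). Edges H `` {v} \<subseteq> ?Y"
  proof
    fix v assume "v \<in> ?Y \<inter> Vp H (opp a)"
    then obtain X where X: "ext_closed H a Z s X" "v \<in> X" "v \<in> Vp H (opp a)" unfolding ext_core_def by blast
    then have "Edges H `` {v} \<subseteq> X" unfolding ext_closed_def by blast
    then show "Edges H `` {v} \<subseteq> ?Y" using X(1) unfolding ext_core_def by blast
  qed
  moreover have "\<forall>v \<in> ?Y \<inter> Vp H a. \<exists>w \<in> ?Y. s v = Some w"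
  proof
    fix v assume "v \<in> ?Y \<inter> Vp H a"
    then obtain X where X: "ext_closed H a Z s X" "v \<in> X" "v \<in> Vp H a" unfolding ext_core_def by blast
    then obtain w where "w \<in> X" "s v = Some w" unfolding ext_closed_def by blast
    then show "\<exists>w \<in> ?Y. s v = Some w" using X(1) unfolding ext_core_def by blast
  qed
  ultimately show ?thesis unfolding ext_closed_def by blast
qed

lemma ext_graph_sub: "ext_graph H a Z s \<subseteq> Rg H a Z s"
proof -
  have c: "ext_closed H a Z s (ext_core H a Z s)" by (rule core_closed)
  show ?thesis
  proof
    fix e assume e: "e \<in> ext_graph H a Z s"
    obtain v w where vw: "e = (v,w)" by (cases e)
    show "e \<in> Rg H a Z s"
    proof (cases "v \<in> Vp H a \<and> s v = Some w")
      case True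
      then have "v \<in> ext_core H a Z s" using e vw unfolding ext_graph_def Let_def by auto
      then obtain w' where "w' \<in> ext_core H a Z s" "s v = Some w'" using c True unfolding ext_closed_def by blast
      then show ?thesis using c True vw \<open>v \<in> ext_core H a Z s\<close> unfolding ext_closed_def Rg_def by auto
    next
      case False
      then have "(v,w) \<in> Edges H" "v \<in> ext_core H a Z s" "v \<in> Vp H (opp a)"
        using e vw unfolding ext_graph_def Let_def by auto
      then show ?thesis using c vw unfolding ext_closed_def Rg_def by blast
    qed
  qed
qed

lemma extract_ok:
  assumes W: "won_all H a (Rg H a Z s)" and ZV: "Z \<subseteq> verts H" and fin: "finite (verts H)"
    and Ct: "(C,t) \<in> extract_tangles H a Z s"
  shows "C \<subseteq> verts H \<and> prio H C mod 2 = a \<and> (\<forall>u\<in>C \<inter> Vp H a. \<exists>w\<in>C. t u = Some w)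
     \<and> won_all H a (tgraph H a C t)"
proof -
  let ?Y = "ext_core H a Z s" and ?E = "ext_graph H a Z s"
  have b: "bottom_scc_with_edge ?Y ?E C" and td: "t = s |` C"
    using Ct unfolding extract_tangles_def by auto
  have c: "ext_closed H a Z s ?Y" by (rule core_closed)
  have CY: "C \<subseteq> ?Y" using b by (simp add: bottom_scc_with_edge_def)
  have YZ: "?Y \<subseteq> Z" using c by (simp add: ext_closed_def)
  have CV: "C \<subseteq> verts H" using CY YZ ZV by blast
  have finC: "finite C" using CV fin finite_subset by blast
  have Cne: "C \<noteq> {}" using b by (simp add: bottom_scc_with_edge_def)
  have sc: "\<And>u w. u \<in> C \<Longrightarrow> w \<in> C \<Longrightarrow> (u,w) \<in> ?E\<^sup>*" using b unfolding bottom_scc_with_edge_def by blast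
  have cl: "\<And>u w. u \<in> C \<Longrightarrow> (u,w) \<in> ?E \<Longrightarrow> w \<in> C" using b unfolding bottom_scc_with_edge_def by blast
  have clr: "\<And>u w. (u,w) \<in> ?E\<^sup>* \<Longrightarrow> u \<in> C \<Longrightarrow> w \<in> C"
  proof -
    fix u w assume "(u,w) \<in> ?E\<^sup>*" "u \<in> C"
    then show "w \<in> C"
    proof (induction rule: rtrancl_induct)
      case base then show ?case .
    next
      case (step y z) then show ?case using cl by blast
    qed
  qed
  obtain u0 w0 where e0: "u0 \<in> C" "w0 \<in> C" "(u0,w0) \<in> ?E" using b unfolding bottom_scc_with_edge_def by blast
  have WE: "won_all H a ?E" using won_all_mono[OF W ext_graph_sub] .
  have "Max (pr H ` C) \<in> pr H ` C" using finC Cne by (intro Max_in) auto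
  then obtain m where m1: "m \<in> C" "pr H m = Max (pr H ` C)" by force
  have "\<forall>x\<in>C. pr H x \<le> pr H m" using m1 finC by simp
  note m = m1(1) this
  have "(m,m) \<in> ?E\<^sup>+"
  proof -
    have 1: "(m,u0) \<in> ?E\<^sup>*" by (rule sc[OF m(1) e0(1)])
    have 2: "(w0,m) \<in> ?E\<^sup>*" by (rule sc[OF e0(2) m(1)])
    show ?thesis by (rule trancl_rtrancl_trancl[OF rtrancl_into_trancl1[OF 1 e0(3)] 2])
  qed
  from cycle_through[OF this] obtain xs where xs: "is_cycle ?E xs" "m \<in> set xs" "set xs \<subseteq> {x. (m,x) \<in> ?E\<^sup>*}"
    by blast
  have setC: "set xs \<subseteq> C"
  proof
    fix x assume "x \<in> set xs"
    then have "(m,x) \<in> ?E\<^sup>*" using xs(3) by blast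
    then show "x \<in> C" using clr m(1) by blast
  qed
  have "prio H (set xs) = pr H m" using m setC xs(2) by (intro prio_eq) auto
  moreover have "prio H C = pr H m" using m finC by (intro prio_eq) auto
  moreover have "prio H (set xs) mod 2 = a" using WE xs(1) unfolding won_all_def by blast
  ultimately have par: "prio H C mod 2 = a" by simp
  have st: "\<forall>u\<in>C \<inter> Vp H a. \<exists>w\<in>C. t u = Some w"
  proof
    fix u assume u: "u \<in> C \<inter> Vp H a"
    then obtain w where "s u = Some w" using c CY unfolding ext_closed_def by blast
    moreover then have "(u,w) \<in> ?E" using u CY unfolding ext_graph_def Let_def by blast
    ultimately show "\<exists>w\<in>C. t u = Some w" using cl[of u w] u td by auto
  qed
  have "tgraph H a C t \<subseteq> ?E"
  proof
    fix e assume e: "e \<in> tgraph H a C t"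
    obtain v w where vw: "e = (v,w)" by (cases e)
    show "e \<in> ?E"
    proof (cases "v \<in> C \<inter> Vp H a \<and> t v = Some w")
      case True
      then have "s v = Some w" using td by (auto simp: restrict_map_def)
      then show ?thesis using True vw CY unfolding ext_graph_def Let_def by blast
    next
      case False
      then have "(v,w) \<in> Edges H" "v \<in> C" "v \<in> Vp H (opp a)"
        using e vw unfolding tgraph_def by auto
      then show ?thesis using vw CY unfolding ext_graph_def Let_def by blast
    qed
  qed
  then have "won_all H a (tgraph H a C t)" using won_all_mono[OF WE] by blast
  then show ?thesis using CV par st by blast
qed

definition INVT :: "'v pgame \<Rightarrow> 'v tangles \<Rightarrow> bool" where
  "INVT G T \<longleftrightarrow> (\<forall>(U,t)\<in>T. U \<subseteq> verts G \<and> (\<forall>u\<in>U \<inter> Vp G (prio G U mod 2). \<exists>w\<in>U. t u = Some w)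
     \<and> won_all G (prio G U mod 2) (tgraph G (prio G U mod 2) U t))"

definition nodead :: "'v pgame \<Rightarrow> 'v set \<Rightarrow> bool" where
  "nodead G W \<longleftrightarrow> (\<forall>v\<in>W. \<exists>w\<in>W. (v,w) \<in> Edges G)"

lemma INVT_Un: "INVT G (X \<union> Y) = (INVT G X \<and> INVT G Y)"
  unfolding INVT_def by (rule ball_Un)

lemma won_all_subgame: "won_all (subgame G W) a R = won_all G a R"
  by (simp add: won_all_def)

lemma inner_facts:
  assumes vg: "valid_game G" and IT: "INVT G T" and nd: "nodead G (verts G - dom r)"
    and ne: "verts G - dom r \<noteq> {}"
    and G': "G' = subgame G (verts G - dom r)"
    and T': "T' = {t \<in> T. fst t \<subseteq> verts G'}"
    and p: "p = prio G (verts G')" and a: "a = p mod 2"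
    and ta: "tattr G' T' a {v \<in> verts G'. pr G v = p} Z s"
  shows "tinv G' a {v \<in> verts G'. pr G v = p} Z s"
    and "won_all G' a (Rg G' a Z s)"
    and "verts G' = verts G - dom r"
    and "finite (verts G')"
    and "ctx G' T' a {v \<in> verts G'. pr G v = p}"
proof -
  let ?W = "verts G - dom r"
  let ?A = "{v \<in> verts G'. pr G v = p}"
  have vG': "verts G' = ?W" using G' by auto
  have finG: "finite (verts G)" using vg by (simp add: valid_game_def)
  have fin: "finite (verts G')" using vG' finG by simp
  have a2: "a < 2" using a by simp
  have c: "ctx G' T' a ?A"
    unfolding ctx_def
  proof (intro conjI)
    show "finite (verts G')" by fact
    have "V0 G \<inter> V1 G = {}" using vg unfolding valid_game_def by blast
    then show "V0 G' \<inter> V1 G' = {}" using G' by auto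
    show "a < 2" by fact
    have "Edges G \<subseteq> verts G \<times> verts G" using vg unfolding valid_game_def by blast
    then show "Edges G' \<subseteq> verts G' \<times> verts G'" using G' by auto
    show "?A \<subseteq> verts G'" by blast
    show "\<forall>(U,t)\<in>T'. U \<subseteq> verts G' \<and> (prio G' U mod 2 = a \<longrightarrow>
        (\<forall>u\<in>U \<inter> Vp G' a. \<exists>w\<in>U. t u = Some w) \<and> won_all G' a (tgraph G' a U t))"
    proof clarify
      fix U t assume Ut: "(U,t) \<in> T'"
      then have UT: "(U,t) \<in> T" and UW: "U \<subseteq> verts G'" using T' by auto
      have UW2: "U \<subseteq> ?W" using UW vG' by simp
      have I: "(\<forall>u\<in>U \<inter> Vp G (prio G U mod 2). \<exists>w\<in>U. t u = Some w)
         \<and> won_all G (prio G U mod 2) (tgraph G (prio G U mod 2) U t)"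
        using bspec[OF IT[unfolded INVT_def] UT] by simp
      show "U \<subseteq> verts G' \<and> (prio G' U mod 2 = a \<longrightarrow>
        (\<forall>u\<in>U \<inter> Vp G' a. \<exists>w\<in>U. t u = Some w) \<and> won_all G' a (tgraph G' a U t))"
        
      proof -
        have "tgraph G' a U t = tgraph G a U t" using G' tgraph_subgame[OF UW2] by simp
        moreover have "won_all G' a R = won_all G a R" for R using G' won_all_subgame by metis
        moreover have "U \<inter> Vp G' a = U \<inter> Vp G a" using G' UW2 by auto
        moreover have "prio G' U = prio G U" using G' by simp
        ultimately show ?thesis using UW I by auto
      qed
    qed
  qed
  show "ctx G' T' a ?A" by fact
  have I: "tinv G' a ?A Z s" by (rule tinv_run[OF c conjunct1[OF ta[unfolded tattr_def]]])
  show "tinv G' a ?A Z s" by fact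
  have mx: "\<forall>v\<in>verts G'. pr G' v \<le> p"
  proof
    fix v assume "v \<in> verts G'"
    then have "pr G v \<le> Max (pr G ` verts G')" using fin by simp
    then show "pr G' v \<le> p" using p G' unfolding prio_def by simp
  qed
  show "won_all G' a (Rg G' a Z s)"
  proof (rule final_won[OF I fin _ mx])
    show "{v \<in> verts G'. pr G v = p} = {v \<in> verts G'. pr G' v = p}" using G' by simp
    show "p mod 2 = a" using a by simp
  qed
  show "verts G' = ?W" by fact
  show "finite (verts G')" by fact
qed

lemma search_inv:
  assumes vg: "valid_game G" and T0: "\<forall>(U, t) \<in> T0. tangle G U t"
    and ss: "search_state G T0 T r Y"
  shows "INVT G T \<and> INVT G Y \<and> nodead G (verts G - dom r)"
  using ss
proof (induction rule: search_state.induct)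
  case start
  have "INVT G T0"
    unfolding INVT_def
  proof clarify
    fix U t assume "(U,t) \<in> T0"
    then have tg: "tangle G U t" using T0 by blast
    define b where "b = prio G U mod 2"
    have t1: "U \<subseteq> verts G" and t2: "dom t = U \<inter> Vp G b"
      and t3: "\<forall>u \<in> dom t. \<exists>w. t u = Some w \<and> w \<in> U \<and> (u, w) \<in> Edges G"
      and t4: "\<forall>xs. is_cycle (tgraph G b U t) xs \<longrightarrow> prio G (set xs) mod 2 = b"
      using tg unfolding tangle_def Let_def b_def by simp_all
    have "\<forall>u\<in>U \<inter> Vp G b. \<exists>w\<in>U. t u = Some w"
    proof
      fix u assume "u \<in> U \<inter> Vp G b"
      then have "u \<in> dom t" using t2 by simp
      then show "\<exists>w\<in>U. t u = Some w" using t3 by blast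
    qed
    then show "U \<subseteq> verts G \<and> (\<forall>u\<in>U \<inter> Vp G (prio G U mod 2). \<exists>w\<in>U. t u = Some w)
     \<and> won_all G (prio G U mod 2) (tgraph G (prio G U mod 2) U t)"
      using t1 t4 unfolding won_all_def b_def by simp
  qed
  moreover have "nodead G (verts G - dom Map.empty)" using vg unfolding valid_game_def nodead_def by blast
  moreover have "INVT G {}" by (simp add: INVT_def)
  ultimately show ?case by simp
next
  case (inner T r Y G' T' p a Z s A)
  then have IT: "INVT G T" and IY: "INVT G Y" and nd: "nodead G (verts G - dom r)" by auto
  note F = inner_facts[OF vg IT nd inner.hyps(2-7)]
  have INA: "INVT G A"
    unfolding INVT_def
  proof clarify
    fix C t assume Ct: "(C,t) \<in> A"
    have ZV: "Z \<subseteq> verts G'" using F(1) by (simp add: tinv_def)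
    have E: "C \<subseteq> verts G' \<and> prio G' C mod 2 = a \<and> (\<forall>u\<in>C \<inter> Vp G' a. \<exists>w\<in>C. t u = Some w)
      \<and> won_all G' a (tgraph G' a C t)"
      using extract_ok[OF F(2) ZV F(4)] Ct inner.hyps(8) by simp
    have CW: "C \<subseteq> verts G - dom r" using E F(3) by blast
    show "C \<subseteq> verts G \<and> (\<forall>u\<in>C \<inter> Vp G (prio G C mod 2). \<exists>w\<in>C. t u = Some w)
     \<and> won_all G (prio G C mod 2) (tgraph G (prio G C mod 2) C t)"
    proof -
      have pa: "prio G C mod 2 = a" using E inner.hyps(3) by simp
      have "tgraph G' a C t = tgraph G a C t" using inner.hyps(3) tgraph_subgame[OF CW] by simp
      then have w: "won_all G a (tgraph G a C t)" using E inner.hyps(3) won_all_subgame by metis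
      have "\<forall>u\<in>C \<inter> Vp G a. \<exists>w\<in>C. t u = Some w"
      proof
        fix u assume u: "u \<in> C \<inter> Vp G a"
        then have "u \<in> C \<inter> Vp G' a" using CW inner.hyps(3) by auto
        then show "\<exists>w\<in>C. t u = Some w" using E by blast
      qed
      then show ?thesis using pa w CW by auto
    qed
  qed
  have nd': "nodead G (verts G - dom (r ++ (\<lambda>v. if v \<in> Z then Some p else None)))"
  proof -
    have dm: "dom (r ++ (\<lambda>v. if v \<in> Z then Some p else None)) = Z \<union> dom r"
      by (auto simp: dom_map_add dom_def)
    have W: "verts G' = verts G - dom r" by (rule F(3))
    have ta: "tattr G' T' a {v \<in> verts G'. pr G v = p} Z s" by (rule inner.hyps(7))
    note tt = ta[unfolded tattr_def]
    have c2: "\<not> (\<exists>v \<in> Vp G' a - Z. \<exists>w \<in> Z. (v, w) \<in> Edges G')" by (rule conjunct1[OF conjunct2[OF tt]])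
    have c3: "\<not> (\<exists>v \<in> Vp G' (opp a) - Z. Edges G' `` {v} \<subseteq> Z)" by (rule conjunct1[OF conjunct2[OF conjunct2[OF tt]]])
    have a2: "a < 2" using inner.hyps(6) by simp
    have cov: "verts G' = Vp G' a \<union> Vp G' (opp a)" by (rule Vp_cover[OF a2])
    show ?thesis unfolding nodead_def dm
    proof
      fix v assume v: "v \<in> verts G - (Z \<union> dom r)"
      then have vW: "v \<in> verts G'" and vZ: "v \<notin> Z" using W by auto
      show "\<exists>w\<in>verts G - (Z \<union> dom r). (v, w) \<in> Edges G"
      proof (cases "v \<in> Vp G' a")
        case True
        obtain w where w: "w \<in> verts G - dom r" "(v,w) \<in> Edges G" using nd vW W unfolding nodead_def by blast
        have "(v,w) \<in> Edges G'" using w vW W inner.hyps(3) by auto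
        then have "w \<notin> Z" using c2 True vZ by blast
        then show ?thesis using w by blast
      next
        case False
        then have "v \<in> Vp G' (opp a)" using cov vW by blast
        then have "\<not> Edges G' `` {v} \<subseteq> Z" using c3 vZ by blast
        then obtain w where "(v,w) \<in> Edges G'" "w \<notin> Z" by blast
        then show ?thesis using inner.hyps(3) by auto
      qed
    qed
  qed
  have "INVT G (Y \<union> A)" using IY INA by (simp add: INVT_Un)
  then show ?case using IT nd' by simp
next
  case (outer T r Y)
  then have "INVT G (T \<union> Y)" by (simp add: INVT_Un)
  moreover have "nodead G (verts G - dom Map.empty)" using vg unfolding valid_game_def nodead_def by blast
  moreover have "INVT G {}" by (simp add: INVT_def)
  ultimately show ?case by simp
qed

lemma bottom_exists:
  assumes fin: "finite Y" and ne: "Y \<noteq> {}" and RY: "R \<subseteq> Y \<times> Y" and succ: "\<forall>v\<in>Y. \<exists>w. (v,w) \<in> R"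
  shows "\<exists>C. bottom_scc_with_edge Y R C"
proof -
  define re where "re v = R\<^sup>* `` {v}" for v
  have reY: "v \<in> Y \<Longrightarrow> re v \<subseteq> Y" for v
  proof
    fix x assume v: "v \<in> Y" and "x \<in> re v"
    then have "(v,x) \<in> R\<^sup>*" by (simp add: re_def)
    then show "x \<in> Y" using v RY by (induction rule: rtrancl_induct) auto
  qed
  obtain v0 where "v0 \<in> Y" using ne by blast
  then obtain u where u: "u \<in> Y" and umin: "\<forall>v. v \<in> Y \<longrightarrow> card (re u) \<le> card (re v)"
    using ex_has_least_nat[of "\<lambda>v. v \<in> Y" v0 "\<lambda>v. card (re v)"] by blast
  let ?C = "re u"
  have bk: "v \<in> ?C \<Longrightarrow> (v,u) \<in> R\<^sup>*" for v
  proof -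
    assume v: "v \<in> ?C"
    then have uv: "(u,v) \<in> R\<^sup>*" by (simp add: re_def)
    have vY: "v \<in> Y" using reY[OF u] v by blast
    have sub: "re v \<subseteq> ?C" using uv unfolding re_def by (auto intro: rtrancl_trans)
    have "finite ?C" using reY[OF u] fin finite_subset by blast
    moreover have "card ?C \<le> card (re v)" using umin vY by blast
    ultimately have "re v = ?C" using sub by (metis card_mono card_subset_eq le_antisym)
    then have "u \<in> re v" by (simp add: re_def)
    then show "(v,u) \<in> R\<^sup>*" by (simp add: re_def)
  qed
  obtain w where uw: "(u,w) \<in> R" using succ u by blast
  have "bottom_scc_with_edge Y R ?C"
    unfolding bottom_scc_with_edge_def
  proof (intro conjI ballI allI impI)
    show "?C \<noteq> {}" by (auto simp: re_def)
    show "?C \<subseteq> Y" by (rule reY[OF u])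
  next
    fix x y assume "x \<in> ?C" "y \<in> ?C"
    then show "(x,y) \<in> R\<^sup>*" using bk unfolding re_def by (auto intro: rtrancl_trans)
  next
    fix x v assume "x \<in> ?C" "(x,v) \<in> R\<^sup>* \<and> (v,x) \<in> R\<^sup>*"
    then show "v \<in> ?C" unfolding re_def by (auto intro: rtrancl_trans)
  next
    fix x v assume "x \<in> ?C" "(x,v) \<in> R"
    then show "v \<in> ?C" unfolding re_def by (auto intro: rtrancl_into_rtrancl)
  next
    show "\<exists>x\<in>?C. \<exists>y\<in>?C. (x,y) \<in> R" using uw unfolding re_def by auto
  qed
  then show ?thesis by blast
qed

theorem lemma6:
  fixes G :: "'v pgame" and T0 T Y :: "'v tangles" and r :: "'v \<rightharpoonup> nat"
    and G' :: "'v pgame" and T' :: "'v tangles" and p a :: nat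
    and Z :: "'v set" and s :: "'v \<rightharpoonup> 'v"
  assumes "valid_game G"
    and "\<forall>(U, t) \<in> T0. tangle G U t"
    and "search_state G T0 T r Y"
    and "verts G - dom r \<noteq> {}"
    and "G' = subgame G (verts G - dom r)"
    and "T' = {t \<in> T. fst t \<subseteq> verts G'}"
    and "p = prio G (verts G')"
    and "a = p mod 2"
    and "tattr G' T' a {v \<in> verts G'. pr G v = p} Z s"
    and "Z = verts G'"
  shows "extract_tangles G' a Z s \<noteq> {}"
proof -
  have SI: "INVT G T \<and> INVT G Y \<and> nodead G (verts G - dom r)"
    by (rule search_inv[OF assms(1-3)])
  then have IT: "INVT G T" and nd: "nodead G (verts G - dom r)" by auto
  note F = inner_facts[OF assms(1) IT nd assms(4-9)]
  let ?A = "{v \<in> verts G'. pr G v = p}"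
  have I: "tinv G' a ?A Z s" by (rule F(1))
  have W: "verts G' = verts G - dom r" by (rule F(3))
  have fin: "finite (verts G')" by (rule F(4))
  have a2: "a < 2" using assms(8) by simp
  have ndG': "\<forall>v\<in>verts G'. \<exists>w\<in>verts G'. (v,w) \<in> Edges G'"
  proof
    fix v assume v: "v \<in> verts G'"
    then obtain w where "w \<in> verts G - dom r" "(v,w) \<in> Edges G" using nd W unfolding nodead_def by blast
    then show "\<exists>w\<in>verts G'. (v,w) \<in> Edges G'" using v W assms(5) by auto
  qed
  have vals: "\<And>v w. s v = Some w \<Longrightarrow> w \<in> Z"
    and tot: "\<And>v. v \<in> Z \<Longrightarrow> v \<in> Vp G' a \<Longrightarrow> v \<notin> ?A \<Longrightarrow> s v \<noteq> None"
    using I unfolding tinv_def by blast+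
  have ta5: "\<forall>v \<in> ?A \<inter> Vp G' a. (\<exists>w \<in> Z. (v, w) \<in> Edges G') \<longrightarrow> s v \<noteq> None"
    using assms(9) unfolding tattr_def by (elim conjE) assumption
  have sv: "\<exists>w\<in>Z. s v = Some w" if v: "v \<in> Z" "v \<in> Vp G' a" for v
  proof -
    have "s v \<noteq> None"
    proof (cases "v \<in> ?A")
      case True
      obtain w where "w \<in> verts G'" "(v,w) \<in> Edges G'" using ndG' v assms(10) by blast
      then show ?thesis using ta5 True v assms(10) by blast
    next
      case False then show ?thesis using tot v by blast
    qed
    then show ?thesis using vals by blast
  qed
  have clZ: "ext_closed G' a Z s Z"
    unfolding ext_closed_def
  proof (intro conjI ballI)
    show "Z \<subseteq> Z" by simp
  next
    fix v assume "v \<in> Z \<inter> Vp G' (opp a)"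
    show "Edges G' `` {v} \<subseteq> Z" using assms(10) assms(5) by auto
  next
    fix v assume "v \<in> Z \<inter> Vp G' a"
    then show "\<exists>w\<in>Z. s v = Some w" using sv by blast
  qed
  have core: "ext_core G' a Z s = Z"
  proof
    show "ext_core G' a Z s \<subseteq> Z" using core_closed[of G' a Z s] unfolding ext_closed_def by blast
    show "Z \<subseteq> ext_core G' a Z s" using clZ unfolding ext_core_def by blast
  qed
  let ?E = "ext_graph G' a Z s"
  have EZ: "?E \<subseteq> Z \<times> Z"
  proof
    fix e assume e: "e \<in> ?E"
    obtain v w where vw: "e = (v,w)" by (cases e)
    have "(v,w) \<in> Rg G' a Z s" using ext_graph_sub e vw by blast
    then show "e \<in> Z \<times> Z" using vw by (simp add: Rg_def)
  qed
  have succ: "\<forall>v\<in>Z. \<exists>w. (v,w) \<in> ?E"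
  proof
    fix v assume v: "v \<in> Z"
    have cov: "verts G' = Vp G' a \<union> Vp G' (opp a)" by (rule Vp_cover[OF a2])
    show "\<exists>w. (v,w) \<in> ?E"
    proof (cases "v \<in> Vp G' a")
      case True
      then obtain w where "s v = Some w" using sv v by blast
      then show ?thesis using True v core unfolding ext_graph_def Let_def by blast
    next
      case False
      then have "v \<in> Vp G' (opp a)" using cov v assms(10) by blast
      moreover obtain w where "(v,w) \<in> Edges G'" using ndG' v assms(10) by blast
      ultimately show ?thesis using v core unfolding ext_graph_def Let_def by blast
    qed
  qed
  have ne: "Z \<noteq> {}" using assms(4) assms(10) W by simp
  have finZ: "finite Z" using fin assms(10) by simp
  obtain C where C: "bottom_scc_with_edge Z ?E C" using bottom_exists[OF finZ ne EZ succ] by blast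
  then have "(C, s |` C) \<in> extract_tangles G' a Z s" unfolding extract_tangles_def core by blast
  then show ?thesis by blast
qed

end
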